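(* Let $t=\lceil\frac{n-\kappa}{2}\rceil$ and $\mathrm{Small}(x)=\mathrm{Small}_t(x)$. Suppose $\mathrm{Small}(u)$ and $\mathrm{Small}(v)$ both exist and $u\in\mathrm{Side}_{\mathrm{Small}(v)}(v)$, and suppose $W$ is a $\kappa$-cut with $u\notin W$ and $\kappa\le|\mathrm{Side}_{\mathrm{Small}(v)}(v)|<|\mathrm{Side}_W(u)|\le t$. Then $v\in W\cup\mathrm{Side}_W(u)$.
   Context: $G=(V,E)$ is a finite, simple, connected, undirected, non-complete graph with $n=|V|$; $\kappa$ is its vertex connectivity, assumed $\kappa<n/4$. A cut is a set $U\subset V$ whose removal disconnects $G$; a $\kappa$-cut is a cut of size $\kappa$; a side of $U$ is a connected component of the subgraph induced on $V\setminus U$; $\mathrm{Side}_U(x)$ is the side containing $x\notin U$. For a vertex $x$ and $t\le\lceil\frac{n-\kappa}{2}\rceil$, $\mathrm{Small}_t(x)$ denotes, when it exists, the unique $\kappa$-cut $Y$ with $x\notin Y$, $|\mathrm{Side}_Y(x)|\le t$, and $\mathrm{Side}_Y(x)\subseteq\mathrm{Side}_U(x)$ for every $\kappa$-cut $U$ with $x\notin U$ and $|\mathrm{Side}_U(x)|\le t$ (it exists iff some $\kappa$-cut $U$ with $x\notin U$ has $|\mathrm{Side}_U(x)|\le t$). *)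

theory Defs
  imports Complex_Main
begin

definition simple_graph :: "'a set \<Rightarrow> ('a \<Rightarrow> 'a \<Rightarrow> bool) \<Rightarrow> bool" where
  "simple_graph V E \<longleftrightarrow> finite V \<and> (\<forall>x y. E x y \<longrightarrow> x \<in> V \<and> y \<in> V \<and> x \<noteq> y \<and> E y x)"

definition reach_in :: "('a \<Rightarrow> 'a \<Rightarrow> bool) \<Rightarrow> 'a set \<Rightarrow> 'a \<Rightarrow> 'a \<Rightarrow> bool" where
  "reach_in E S x y \<longleftrightarrow> x \<in> S \<and> y \<in> S \<and> (\<lambda>a b. E a b \<and> a \<in> S \<and> b \<in> S)\<^sup>*\<^sup>* x y"

definition graph_connected :: "'a set \<Rightarrow> ('a \<Rightarrow> 'a \<Rightarrow> bool) \<Rightarrow> bool" where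
  "graph_connected V E \<longleftrightarrow> V \<noteq> {} \<and> (\<forall>x\<in>V. \<forall>y\<in>V. reach_in E V x y)"

definition complete_graph :: "'a set \<Rightarrow> ('a \<Rightarrow> 'a \<Rightarrow> bool) \<Rightarrow> bool" where
  "complete_graph V E \<longleftrightarrow> (\<forall>x\<in>V. \<forall>y\<in>V. x \<noteq> y \<longrightarrow> E x y)"

definition is_cut :: "'a set \<Rightarrow> ('a \<Rightarrow> 'a \<Rightarrow> bool) \<Rightarrow> 'a set \<Rightarrow> bool" where
  "is_cut V E U \<longleftrightarrow> U \<subseteq> V \<and> (\<exists>x\<in>V - U. \<exists>y\<in>V - U. \<not> reach_in E (V - U) x y)"

text \<open>Vertex connectivity (G non-complete, so cuts exist).\<close>
definition vconn :: "'a set \<Rightarrow> ('a \<Rightarrow> 'a \<Rightarrow> bool) \<Rightarrow> nat" where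
  "vconn V E = Min {card U | U. is_cut V E U}"

definition is_kcut :: "'a set \<Rightarrow> ('a \<Rightarrow> 'a \<Rightarrow> bool) \<Rightarrow> 'a set \<Rightarrow> bool" where
  "is_kcut V E U \<longleftrightarrow> is_cut V E U \<and> card U = vconn V E"

definition side :: "'a set \<Rightarrow> ('a \<Rightarrow> 'a \<Rightarrow> bool) \<Rightarrow> 'a set \<Rightarrow> 'a \<Rightarrow> 'a set" where
  "side V E U x = {y. reach_in E (V - U) x y}"

definition is_small :: "'a set \<Rightarrow> ('a \<Rightarrow> 'a \<Rightarrow> bool) \<Rightarrow> nat \<Rightarrow> 'a \<Rightarrow> 'a set \<Rightarrow> bool" where
  "is_small V E t x Y \<longleftrightarrow> is_kcut V E Y \<and> x \<notin> Y \<and> card (side V E Y x) \<le> t \<and>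
     (\<forall>U. is_kcut V E U \<and> x \<notin> U \<and> card (side V E U x) \<le> t \<longrightarrow> side V E Y x \<subseteq> side V E U x)"

definition small_exists :: "'a set \<Rightarrow> ('a \<Rightarrow> 'a \<Rightarrow> bool) \<Rightarrow> nat \<Rightarrow> 'a \<Rightarrow> bool" where
  "small_exists V E t x \<longleftrightarrow> (\<exists>Y. is_small V E t x Y)"

end

theory Submission
  imports Defs
begin

lemma side_sub: "side V E U x \<subseteq> V - U"
  unfolding side_def reach_in_def by auto

lemma side_self: "x \<in> V - U \<Longrightarrow> x \<in> side V E U x"
  unfolding side_def reach_in_def by auto

lemma side_closed:
  assumes "simple_graph V E" "a \<in> side V E U x" "E a b" "b \<notin> U"
  shows "b \<in> side V E U x"
proof -
  have bV: "b \<in> V" using assms(1,3) unfolding simple_graph_def by blast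
  from assms(2) have r: "(\<lambda>a b. E a b \<and> a \<in> V - U \<and> b \<in> V - U)\<^sup>*\<^sup>* x a" "x \<in> V - U" "a \<in> V - U"
    unfolding side_def reach_in_def by auto
  have "(\<lambda>a b. E a b \<and> a \<in> V - U \<and> b \<in> V - U)\<^sup>*\<^sup>* x b"
    using r bV assms(3,4) by (intro rtranclp.rtrancl_into_rtrancl[OF r(1)]) auto
  then show ?thesis using r bV assms(4) unfolding side_def reach_in_def by auto
qed

lemma sep_cut:
  assumes "N \<subseteq> V" "x \<in> X" "X \<subseteq> V" "X \<inter> N = {}" "y \<in> V - N - X"
    and cl: "\<forall>a\<in>X. \<forall>b. E a b \<longrightarrow> b \<in> X \<union> N"
  shows "is_cut V E N \<and> side V E N x \<subseteq> X"
proof -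
  have key: "z \<in> X" if "(\<lambda>a b. E a b \<and> a \<in> V - N \<and> b \<in> V - N)\<^sup>*\<^sup>* x z" for z
    using that
  proof (induction rule: rtranclp_induct)
    case base then show ?case using assms(2) .
  next
    case (step w z) then show ?case using cl by blast
  qed
  have "\<not> reach_in E (V - N) x y" using key assms(5) unfolding reach_in_def by blast
  moreover have "x \<in> V - N" using assms(2,3,4) by blast
  ultimately have "is_cut V E N" using assms(1,5) unfolding is_cut_def by blast
  moreover have "side V E N x \<subseteq> X" using key unfolding side_def reach_in_def by blast
  ultimately show ?thesis by blast
qed

lemma cut_ge:
  assumes "simple_graph V E" "is_cut V E U"
  shows "vconn V E \<le> card U"
proof -
  have "{card U |U. is_cut V E U} \<subseteq> card ` Pow V" unfolding is_cut_def by auto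
  moreover have "finite V" using assms(1) unfolding simple_graph_def by blast
  ultimately have "finite {card U |U. is_cut V E U}" by (meson finite_Pow_iff finite_imageI finite_subset)
  then show ?thesis unfolding vconn_def using assms(2) by (intro Min_le) auto
qed

theorem lemma10:
  fixes V :: "'a set" and E :: "'a \<Rightarrow> 'a \<Rightarrow> bool" and u v :: 'a and W :: "'a set" and t :: nat and Yv :: "'a set"
  assumes "simple_graph V E" and "graph_connected V E" and "\<not> complete_graph V E"
    and "4 * vconn V E < card V"
    and "t = nat (ceiling ((real (card V) - real (vconn V E)) / 2))"
    and "u \<in> V" and "v \<in> V"
    and "small_exists V E t u" and "is_small V E t v Yv"
    and "u \<in> side V E (Yv) v"
    and "is_kcut V E W" and "u \<notin> W"
    and "vconn V E \<le> card (side V E (Yv) v)"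
    and "card (side V E (Yv) v) < card (side V E W u)"
    and "card (side V E W u) \<le> t"
  shows "v \<in> W \<union> side V E W u"
proof (rule ccontr)
  assume nv: "v \<notin> W \<union> side V E W u"
  define k where "k = vconn V E"
  define S where "S = side V E Yv v"
  define A where "A = side V E W u"
  have G: "simple_graph V E" by fact
  have fV: "finite V" using G unfolding simple_graph_def by blast
  have sym: "\<And>a b. E a b \<Longrightarrow> E b a" and inV: "\<And>a b. E a b \<Longrightarrow> b \<in> V"
    using G unfolding simple_graph_def by blast+
  have Yk: "is_kcut V E Yv" "v \<notin> Yv" "card S \<le> t"
    and minS: "\<And>U. is_kcut V E U \<Longrightarrow> v \<notin> U \<Longrightarrow> card (side V E U v) \<le> t \<Longrightarrow> S \<subseteq> side V E U v"
    using assms(9) unfolding is_small_def S_def by blast+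
  have YV: "Yv \<subseteq> V" "card Yv = k" using Yk(1) unfolding is_kcut_def is_cut_def k_def by auto
  have WV: "W \<subseteq> V" "card W = k" using assms(11) unfolding is_kcut_def is_cut_def k_def by auto
  have SV: "S \<subseteq> V - Yv" unfolding S_def by (rule side_sub)
  have AV: "A \<subseteq> V - W" unfolding A_def by (rule side_sub)
  have vS: "v \<in> S" unfolding S_def using Yk(2) assms(7) by (intro side_self) auto
  have uS: "u \<in> S" using assms(10) S_def by simp
  have uA: "u \<in> A" unfolding A_def using assms(6,12) by (intro side_self) auto
  have vA: "v \<notin> A" "v \<notin> W" using nv A_def by auto
  have clS: "\<And>a b. a \<in> S \<Longrightarrow> E a b \<Longrightarrow> b \<in> S \<union> Yv"
    using side_closed[OF G] S_def by blast
  have clA: "\<And>a b. a \<in> A \<Longrightarrow> E a b \<Longrightarrow> b \<in> A \<union> W"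
    using side_closed[OF G] A_def by blast
  define N3 where "N3 = (Yv - A) \<union> (W \<inter> S)"
  define X3 where "X3 = S - W - A"
  define N4 where "N4 = (Yv \<inter> A) \<union> (W - S)"
  define X4 where "X4 = A - Yv - S"
  have c3: "is_cut V E N3 \<and> side V E N3 v \<subseteq> X3"
  proof (rule sep_cut[where y=u])
    show "\<forall>a\<in>X3. \<forall>b. E a b \<longrightarrow> b \<in> X3 \<union> N3"
    proof (intro ballI allI impI)
      fix a b assume a: "a \<in> X3" "E a b"
      have "b \<notin> A"
      proof
        assume "b \<in> A"
        then have "a \<in> A" using clA[of b a] sym[OF a(2)] a(1) X3_def by blast
        then show False using a(1) X3_def by blast
      qed
      then show "b \<in> X3 \<union> N3" using clS[of a b] a X3_def N3_def by blast
    qed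
  qed (use YV WV SV AV vS vA uA uS in \<open>auto simp: N3_def X3_def\<close>)
  have c4: "X4 \<noteq> {} \<Longrightarrow> is_cut V E N4"
  proof -
    assume "X4 \<noteq> {}"
    then obtain x where x: "x \<in> X4" by blast
    have "is_cut V E N4 \<and> side V E N4 x \<subseteq> X4"
    proof (rule sep_cut[where y=v])
      show "\<forall>a\<in>X4. \<forall>b. E a b \<longrightarrow> b \<in> X4 \<union> N4"
      proof (intro ballI allI impI)
        fix a b assume a: "a \<in> X4" "E a b"
        have "b \<notin> S"
        proof
          assume "b \<in> S"
          then have "a \<in> S" using clS[of b a] sym[OF a(2)] a(1) X4_def by blast
          then show False using a(1) X4_def by blast
        qed
        then show "b \<in> X4 \<union> N4" using clA[of a b] a X4_def N4_def by blast
      qed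
    qed (use x YV WV SV AV vS vA uA uS in \<open>auto simp: N4_def X4_def\<close>)
    then show ?thesis by blast
  qed
  have fin: "finite Yv" "finite W" "finite S" "finite A"
    using YV WV SV AV fV finite_subset by blast+
  have k3: "k \<le> card N3" using cut_ge[OF G] c3 k_def by blast
  have cN3: "card N3 \<le> card (Yv - A) + card (W \<inter> S)"
    unfolding N3_def by (rule card_Un_le)
  have cN4: "card N4 \<le> card (Yv \<inter> A) + card (W - S)"
    unfolding N4_def by (rule card_Un_le)
  have eY: "card Yv = card (Yv - A) + card (Yv \<inter> A)"
    using card_Int_Diff[OF fin(1), of A] by (simp add: Int_commute)
  have eW: "card W = card (W \<inter> S) + card (W - S)"
    using card_Int_Diff[OF fin(2), of S] by simp
  show False
  proof (cases "X4 = {}")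
    case False
    have "k \<le> card N4" using cut_ge[OF G] c4[OF False] k_def by blast
    then have "card N3 = k" using k3 cN3 cN4 eY eW YV WV by linarith
    then have kc: "is_kcut V E N3" using c3 k_def unfolding is_kcut_def by blast
    have vN3: "v \<notin> N3" using vS vA SV N3_def Yk(2) by blast
    have "side V E N3 v \<subseteq> S" using c3 X3_def by blast
    then have "card (side V E N3 v) \<le> card S" using fin by (intro card_mono) auto
    then have "S \<subseteq> side V E N3 v" using minS[OF kc vN3] Yk(3) by linarith
    then show False using c3 uS uA X3_def by blast
  next
    case True
    then have "A \<subseteq> S \<union> Yv" using X4_def by blast
    then have "A = (A \<inter> S) \<union> (Yv \<inter> A)" by blast
    moreover have "S \<inter> Yv = {}" using SV by blast
    ultimately have cA: "card A = card (A \<inter> S) + card (Yv \<inter> A)"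
      using fin by (metis card_Un_disjoint finite_Int Int_assoc Int_commute Int_empty_right Int_left_commute)
    have "S = (A \<inter> S) \<union> (W \<inter> S) \<union> X3" using X3_def AV by blast
    moreover have "v \<in> X3" using vS vA X3_def by blast
    ultimately have cS: "card S \<ge> card (A \<inter> S) + card (W \<inter> S) + 1"
    proof -
      assume eq: "S = (A \<inter> S) \<union> (W \<inter> S) \<union> X3" and vX: "v \<in> X3"
      have d1: "(A \<inter> S) \<inter> (W \<inter> S) = {}" using AV by blast
      have "card ((A \<inter> S) \<union> (W \<inter> S)) = card (A \<inter> S) + card (W \<inter> S)"
        using fin d1 by (intro card_Un_disjoint) auto
      moreover have "card ((A \<inter> S) \<union> (W \<inter> S) \<union> X3) = card ((A \<inter> S) \<union> (W \<inter> S)) + card X3"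
        using fin X3_def by (intro card_Un_disjoint) auto
      moreover have "card X3 \<ge> 1" using vX fin X3_def
        by (metis One_nat_def Suc_leI card_gt_0_iff empty_iff finite_Diff)
      ultimately show ?thesis using eq by simp
    qed
    have "card S < card A" using assms(14) S_def A_def by simp
    then show False using cA cS k3 cN3 eY YV by linarith
  qed
qed

end
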